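(* Let $\{G(n)\}$ be a sequence of random intersection graphs with $\mathbb E\,Y(n)^2=O(1)$ and $m(n)\to\infty$. Then with probability tending to $1$, for every pair of distinct attributes $w',w''\in W$ there are at most two vertices $v$ with $\{w',w''\}\subseteq S_v$.
   Context: Random intersection graph: given positive integers $n,m$ and a probability measure $P$ on $\{0,\dots,m\}$, $G(n,m,P)$ has vertex set $V=[n]$ and attribute set $W=\{w_1,\dots,w_m\}$; independent random subsets $S_1,\dots,S_n\subseteq W$ with $\mathbb P(S_v=S)=P(|S|)/\binom{m}{|S|}$; distinct $u,v$ adjacent iff $S_u\cap S_v\ne\emptyset$. For a sequence $G(n)=G(n,m(n),P(n))$, $X(n)$ has law $P(n)$ and $Y(n)=(n/m)^{1/2}X(n)$. *)

theory Defs
  imports "HOL-Probability.Probability" "HOL-Library.Landau_Symbols"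
begin

text \<open>Attributes are w_0,...,w_(m-1), represented as the naturals below m.
  P is a pmf on sizes {0..m}. A random attribute set: pick k with law P,
  then a uniform k-subset of the attributes, so that
  Pr(S_v = S) = P(|S|) / (m choose |S|).\<close>
definition rig_attr_pmf :: "nat \<Rightarrow> nat pmf \<Rightarrow> nat set pmf" where
  "rig_attr_pmf m P =
     bind_pmf P (\<lambda>k. pmf_of_set {S. S \<subseteq> {..<m} \<and> card S = k})"

definition rig_pmf :: "nat \<Rightarrow> nat \<Rightarrow> nat pmf \<Rightarrow> (nat \<Rightarrow> nat set) pmf" where
  "rig_pmf n m P = Pi_pmf {1..n} {} (\<lambda>_. rig_attr_pmf m P)"

definition pairs_at_most_two :: "nat \<Rightarrow> nat \<Rightarrow> (nat \<Rightarrow> nat set) \<Rightarrow> bool" where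
  "pairs_at_most_two n m S \<longleftrightarrow>
     (\<forall>w1<m. \<forall>w2<m. w1 \<noteq> w2 \<longrightarrow> card {v\<in>{1..n}. {w1, w2} \<subseteq> S v} \<le> 2)"

end

theory Submission
  imports Defs "HOL-Real_Asymp.Real_Asymp"
begin

lemma count_pair_subsets:
  assumes "a \<noteq> b" "a < m" "b < m" "2 \<le> k"
  shows "card {S. S \<subseteq> {..<m} \<and> card S = k \<and> {a,b} \<subseteq> S} = (m-2) choose (k-2)"
proof -
  let ?A = "{..<m} - {a,b}"
  have eq: "{S. S \<subseteq> {..<m} \<and> card S = k \<and> {a,b} \<subseteq> S} = (\<lambda>T. T \<union> {a,b}) ` {T. T \<subseteq> ?A \<and> card T = k-2}"
  proof (intro equalityI subsetI)
    fix S assume S: "S \<in> {S. S \<subseteq> {..<m} \<and> card S = k \<and> {a,b} \<subseteq> S}"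
    have fin: "finite S" using S finite_subset by blast
    have "card (S - {a,b}) = k - 2" using S fin assms(1) by (simp add: card_Diff_subset)
    moreover have "S = (S - {a,b}) \<union> {a,b}" using S by auto
    ultimately show "S \<in> (\<lambda>T. T \<union> {a,b}) ` {T. T \<subseteq> ?A \<and> card T = k-2}" using S by blast
  next
    fix S assume "S \<in> (\<lambda>T. T \<union> {a,b}) ` {T. T \<subseteq> ?A \<and> card T = k-2}"
    then obtain T where T: "T \<subseteq> ?A" "card T = k-2" "S = T \<union> {a,b}" by blast
    have fin: "finite T" using T(1) finite_subset by blast
    have "card S = card T + 2" using T fin assms(1) by (subst T(3), subst card_Un_disjoint) auto
    then show "S \<in> {S. S \<subseteq> {..<m} \<and> card S = k \<and> {a,b} \<subseteq> S}" using T assms by auto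
  qed
  have inj: "inj_on (\<lambda>T. T \<union> {a,b}) {T. T \<subseteq> ?A \<and> card T = k-2}"
    by (rule inj_onI) blast
  have "card ?A = m - 2" using assms by (simp add: card_Diff_subset)
  then show ?thesis unfolding eq using inj
    by (simp add: card_image n_subsets)
qed

lemma choose_two_id:
  assumes "2 \<le> k" "k \<le> m"
  shows "(m choose k) * (k * (k-1)) = m * (m-1) * ((m-2) choose (k-2))"
proof -
  obtain j where j: "k = Suc (Suc j)" using assms(1) by (metis add_2_eq_Suc le_Suc_ex)
  obtain i where i: "m = Suc (Suc i)" using assms by (metis add_2_eq_Suc le_Suc_ex le_trans)
  have 1: "Suc (Suc j) * (Suc (Suc i) choose Suc (Suc j)) = Suc (Suc i) * (Suc i choose Suc j)"
    by (rule Suc_times_binomial)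
  have 2: "Suc j * (Suc i choose Suc j) = Suc i * (i choose j)"
    by (rule Suc_times_binomial)
  have "(m choose k) * (k * (k-1)) = Suc j * (Suc (Suc j) * (Suc (Suc i) choose Suc (Suc j)))"
    using j i by (simp del: binomial_Suc_Suc add: algebra_simps)
  also have "\<dots> = Suc j * (Suc (Suc i) * (Suc i choose Suc j))" by (simp only: 1)
  also have "\<dots> = Suc (Suc i) * (Suc j * (Suc i choose Suc j))" by (simp only: ac_simps)
  also have "\<dots> = Suc (Suc i) * (Suc i * (i choose j))" by (simp only: 2)
  also have "\<dots> = m * (m-1) * ((m-2) choose (k-2))" using i j by (simp del: binomial_Suc_Suc add: algebra_simps)
  finally show ?thesis .
qed

lemma prob_pair_uniform:
  assumes "a \<noteq> b" "a < m" "b < m"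
  shows "measure_pmf.prob (pmf_of_set {S. S \<subseteq> {..<m} \<and> card S = k}) {X. {a,b} \<subseteq> X}
          \<le> real k ^ 2 / (real m * (real m - 1))"
proof (cases "k \<le> m")
  case False
  have m2: "m \<ge> 2" using assms by auto
  have "real m * (real m - 1) \<le> real k * real k" using False m2
    by (intro mult_mono) auto
  then have "real m * (real m - 1) \<le> real k ^ 2" by (simp add: power2_eq_square)
  moreover have "real m * (real m - 1) > 0" using m2 by simp
  ultimately have "1 \<le> real k ^ 2 / (real m * (real m - 1))" by simp
  then show ?thesis using measure_pmf.prob_le_1 order_trans by blast
next
  case True
  let ?S = "{S. S \<subseteq> {..<m} \<and> card S = k}"
  have fin: "finite ?S" by (rule finite_subset[of _ "Pow {..<m}"]) auto
  have ne: "?S \<noteq> {}" using True by (intro ex_in_conv[THEN iffD1] exI[of _ "{..<k}"]) auto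
  have cS: "card ?S = m choose k" using n_subsets[of "{..<m}" k] by simp
  have m2: "m \<ge> 2" using assms by auto
  have pos: "real m * (real m - 1) > 0" using m2 by simp
  have eq: "?S \<inter> {X. {a,b} \<subseteq> X} = {S. S \<subseteq> {..<m} \<and> card S = k \<and> {a,b} \<subseteq> S}" by auto
  show ?thesis
  proof (cases "k \<ge> 2")
    case False
    have "?S \<inter> {X. {a,b} \<subseteq> X} = {}"
    proof (rule ccontr)
      assume "?S \<inter> {X. {a,b} \<subseteq> X} \<noteq> {}"
      then obtain S where S: "S \<subseteq> {..<m}" "card S = k" "{a,b} \<subseteq> S" by auto
      have "card {a,b} \<le> card S" using S finite_subset by (intro card_mono) auto
      then show False using S assms False by simp
    qed
    then show ?thesis using measure_pmf_of_set[OF ne fin, of "{X. {a,b} \<subseteq> X}"] pos by simp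
  next
    case True2: True
    have ck: "(m choose k) > 0" using True by simp
    have "measure_pmf.prob (pmf_of_set ?S) {X. {a,b} \<subseteq> X} = real ((m-2) choose (k-2)) / real (m choose k)"
      using measure_pmf_of_set[OF ne fin, of "{X. {a,b} \<subseteq> X}"] by (simp only: eq count_pair_subsets[OF assms True2] cS)
    also have "\<dots> = real (k*(k-1)) / real (m*(m-1))"
    proof -
      have "real (m choose k) * real (k * (k-1)) = real (m*(m-1)) * real ((m-2) choose (k-2))"
        using choose_two_id[OF True2 True] by (metis of_nat_mult)
      moreover have "real (m*(m-1)) > 0" using m2 by simp
      moreover have "real (m choose k) > 0" using ck by simp
      ultimately show ?thesis by (subst frac_eq_eq) (auto simp only: mult.commute)
    qed
    also have "\<dots> \<le> real k ^ 2 / (real m * (real m - 1))"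
    proof -
      have "k*(k-1) \<le> k * k" by simp
      then have "real (k*(k-1)) \<le> real k ^ 2" unfolding power2_eq_square by (metis of_nat_le_iff of_nat_mult)
      moreover have "real (m*(m-1)) = real m * (real m - 1)" using m2 by (simp add: of_nat_diff)
      ultimately show ?thesis using pos by (metis divide_right_mono less_eq_real_def)
    qed
    finally show ?thesis .
  qed
qed

lemma measure_bind_pmf_real:
  "measure_pmf.prob (bind_pmf M N) X = (\<integral>x. measure_pmf.prob (N x) X \<partial>measure_pmf M)"
proof -
  have "ennreal (measure_pmf.prob (bind_pmf M N) X) = emeasure (bind_pmf M N) X"
    by (simp add: measure_pmf.emeasure_eq_measure)
  also have "\<dots> = (\<integral>\<^sup>+x. emeasure (N x) X \<partial>M)" by simp
  also have "\<dots> = (\<integral>\<^sup>+x. ennreal (measure_pmf.prob (N x) X) \<partial>M)"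
    by (simp add: measure_pmf.emeasure_eq_measure)
  also have "\<dots> = ennreal (\<integral>x. measure_pmf.prob (N x) X \<partial>measure_pmf M)"
    by (rule nn_integral_eq_integral)
       (auto intro!: measure_pmf.integrable_const_bound[where B=1])
  finally show ?thesis by (simp add: integral_nonneg)
qed


lemma attr_pair_bound:
  assumes "a \<noteq> b" "a < m" "b < m" "set_pmf P \<subseteq> {0..m}"
  shows "measure_pmf.prob (rig_attr_pmf m P) {X. {a,b} \<subseteq> X}
          \<le> (\<integral>k. real k ^ 2 \<partial>measure_pmf P) / (real m * (real m - 1))"
proof -
  have fin: "finite (set_pmf P)" using assms(4) finite_subset by blast
  have "measure_pmf.prob (rig_attr_pmf m P) {X. {a,b} \<subseteq> X}
        = (\<integral>k. measure_pmf.prob (pmf_of_set {S. S \<subseteq> {..<m} \<and> card S = k}) {X. {a,b} \<subseteq> X} \<partial>measure_pmf P)"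
    unfolding rig_attr_pmf_def by (rule measure_bind_pmf_real)
  also have "\<dots> \<le> (\<integral>k. real k ^ 2 / (real m * (real m - 1)) \<partial>measure_pmf P)"
    by (intro integral_mono integrable_measure_pmf_finite[OF fin] prob_pair_uniform[OF assms(1-3)])
  also have "\<dots> = (\<integral>k. real k ^ 2 \<partial>measure_pmf P) / (real m * (real m - 1))"
    by (rule integral_divide_zero)
  finally show ?thesis .
qed

lemma Pi_event_prob:
  assumes "T \<subseteq> {1..n}"
  shows "measure_pmf.prob (rig_pmf n m P) {S. \<forall>v\<in>T. {a,b} \<subseteq> S v}
       = measure_pmf.prob (rig_attr_pmf m P) {X. {a,b} \<subseteq> X} ^ card T"
proof -
  define E where "E = {X. {a,b} \<subseteq> (X::nat set)}"
  let ?B = "\<lambda>v. if v \<in> T then E else UNIV"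
  have eq: "{S. \<forall>v\<in>T. {a,b} \<subseteq> S v} = Pi {1..n} ?B" using assms by (auto simp: Pi_def E_def)
  have "measure_pmf.prob (rig_pmf n m P) (Pi {1..n} ?B)
        = (\<Prod>v\<in>{1..n}. measure_pmf.prob (rig_attr_pmf m P) (?B v))"
    unfolding rig_pmf_def by (rule measure_Pi_pmf_Pi) simp
  also have "\<dots> = (\<Prod>v\<in>{1..n}. if v \<in> T then measure_pmf.prob (rig_attr_pmf m P) E else 1)"
    by (intro prod.cong refl) simp
  also have "\<dots> = measure_pmf.prob (rig_attr_pmf m P) E ^ card T"
    using assms by (simp add: prod.If_cases Int_absorb1 Int_absorb2 inf.absorb_iff2[symmetric])
  finally show ?thesis using eq by (simp add: E_def)
qed


lemma fail_bound:
  assumes supp: "set_pmf P \<subseteq> {0..m}" and m2: "m \<ge> 2"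
  defines "q \<equiv> (\<integral>k. real k ^ 2 \<partial>measure_pmf P) / (real m * (real m - 1))"
  shows "measure_pmf.prob (rig_pmf n m P) {S. \<not> pairs_at_most_two n m S}
           \<le> real m ^ 2 * real n ^ 3 * q ^ 3"
proof -
  define Pr where "Pr = {(a,b). a < m \<and> b < m \<and> a \<noteq> (b::nat)}"
  define Ts where "Ts = {T. T \<subseteq> {1..n} \<and> card T = 3}"
  define I where "I = Pr \<times> Ts"
  define Ev where "Ev = (\<lambda>(ab, T). {S. \<forall>v\<in>T. {fst ab, snd ab} \<subseteq> (S::nat \<Rightarrow> nat set) v})"
  have finPr: "finite Pr"
    by (rule finite_subset[of _ "{..<m} \<times> {..<m}"]) (auto simp: Pr_def)
  have finTs: "finite Ts" unfolding Ts_def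
    by (rule finite_subset[of _ "Pow {1..n}"]) auto
  have finI: "finite I" using finPr finTs by (simp add: I_def)
  have q0: "q \<ge> 0" unfolding q_def using m2
    by (intro divide_nonneg_pos integral_nonneg) auto
  have sub: "{S. \<not> pairs_at_most_two n m S} \<subseteq> (\<Union>i\<in>I. Ev i)"
  proof
    fix S assume "S \<in> {S. \<not> pairs_at_most_two n m S}"
    then obtain a b where ab: "a < m" "b < m" "a \<noteq> b"
      and c: "\<not> card {v\<in>{1..n}. {a, b} \<subseteq> S v} \<le> 2"
      unfolding pairs_at_most_two_def by auto
    obtain T where T: "T \<subseteq> {v\<in>{1..n}. {a, b} \<subseteq> S v}" "card T = 3"
      using obtain_subset_with_card_n[of 3 "{v\<in>{1..n}. {a, b} \<subseteq> S v}"] c by force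
    have "((a,b),T) \<in> I" using ab T by (auto simp: I_def Pr_def Ts_def)
    moreover have "S \<in> Ev ((a,b),T)" using T by (auto simp: Ev_def)
    ultimately show "S \<in> (\<Union>i\<in>I. Ev i)" by blast
  qed
  have "measure_pmf.prob (rig_pmf n m P) {S. \<not> pairs_at_most_two n m S}
        \<le> measure_pmf.prob (rig_pmf n m P) (\<Union>i\<in>I. Ev i)"
    using sub by (intro measure_pmf.finite_measure_mono) auto
  also have "\<dots> \<le> (\<Sum>i\<in>I. measure_pmf.prob (rig_pmf n m P) (Ev i))"
    using finI by (intro measure_UNION_le) auto
  also have "\<dots> \<le> (\<Sum>i\<in>I. q ^ 3)"
  proof (intro sum_mono)
    fix i assume "i \<in> I"
    then obtain a b T where i: "i = ((a,b),T)" "a < m" "b < m" "a \<noteq> b" "T \<subseteq> {1..n}" "card T = 3"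
      by (auto simp: I_def Pr_def Ts_def)
    have "measure_pmf.prob (rig_pmf n m P) (Ev i)
          = measure_pmf.prob (rig_attr_pmf m P) {X. {a,b} \<subseteq> X} ^ 3"
      using Pi_event_prob[OF i(5), of m P a b] i by (simp add: Ev_def)
    also have "\<dots> \<le> q ^ 3"
      using attr_pair_bound[OF i(4,2,3) supp] by (intro power_mono) (auto simp: q_def)
    finally show "measure_pmf.prob (rig_pmf n m P) (Ev i) \<le> q ^ 3" .
  qed
  also have "\<dots> = real (card Pr) * real (card Ts) * q ^ 3" by (simp add: I_def card_cartesian_product)
  also have "\<dots> \<le> real m ^ 2 * real n ^ 3 * q ^ 3"
  proof -
    have "card Pr \<le> card ({..<m} \<times> {..<m})"
      by (intro card_mono) (auto simp: Pr_def)
    then have 1: "real (card Pr) \<le> real m ^ 2" by (metis card_cartesian_product card_lessThan of_nat_le_iff of_nat_mult power2_eq_square)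
    have "card Ts = n choose 3" unfolding Ts_def using n_subsets[of "{1..n}" 3] by simp
    moreover have "n choose 3 \<le> n ^ 3"
      by (cases "3 \<le> n") (auto intro: binomial_le_pow simp: binomial_eq_0)
    ultimately have 2: "real (card Ts) \<le> real n ^ 3" by (metis of_nat_le_iff of_nat_power)
    show ?thesis using 1 2 q0 by (intro mult_mono) auto
  qed
  finally show ?thesis .
qed


theorem mainTheorem17:
  fixes m :: "nat \<Rightarrow> nat" and P :: "nat \<Rightarrow> nat pmf"
  assumes m_pos: "\<And>n. m n > 0"
    and P_supp: "\<And>n. set_pmf (P n) \<subseteq> {0..m n}"
    and EY2: "(\<lambda>n. measure_pmf.expectation (P n)
                 (\<lambda>k. (sqrt (real n / real (m n)) * real k)\<^sup>2)) \<in> O(\<lambda>_. 1)"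
    and m_inf: "filterlim m at_top at_top"
  shows "(\<lambda>n. measure_pmf.prob (rig_pmf n (m n) (P n))
            {S. pairs_at_most_two n (m n) S}) \<longlonglongrightarrow> 1"
proof -
  define K where "K n = (\<integral>k. real k ^ 2 \<partial>measure_pmf (P n))" for n
  have K0: "K n \<ge> 0" for n unfolding K_def by (rule Bochner_Integration.integral_nonneg) auto
  have EK: "measure_pmf.expectation (P n) (\<lambda>k. (sqrt (real n / real (m n)) * real k)\<^sup>2)
            = real n / real (m n) * K n" for n
  proof -
    have "(\<lambda>k. (sqrt (real n / real (m n)) * real k)\<^sup>2) = (\<lambda>k. real n / real (m n) * real k ^ 2)"
      by (auto simp: power_mult_distrib)
    then show ?thesis by (simp add: K_def)
  qed
  from EY2 obtain c where c: "c > 0"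
    "eventually (\<lambda>n. norm (measure_pmf.expectation (P n)
                 (\<lambda>k. (sqrt (real n / real (m n)) * real k)\<^sup>2)) \<le> c * norm (1::real)) sequentially"
    by (elim landau_o.bigE) auto
  have ev_m: "eventually (\<lambda>n. m n \<ge> 2) sequentially"
    using m_inf by (simp add: filterlim_at_top)
  define g where "g x = c ^ 3 * (x ^ 2 / (x - 1) ^ 3)" for x :: real
  have lower: "eventually (\<lambda>n. 1 - g (real (m n)) \<le> measure_pmf.prob (rig_pmf n (m n) (P n))
            {S. pairs_at_most_two n (m n) S}) sequentially"
    using c(2) ev_m
  proof eventually_elim
    case (elim n)
    let ?m = "real (m n)"
    have mpos: "?m - 1 > 0" using elim(2) by simp
    have "real n / ?m * K n \<le> c" using elim(1) EK[of n] K0[of n] by simp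
    then have nK: "real n * K n \<le> c * ?m" using elim(2) by (simp add: field_simps)
    define q where "q = K n / (?m * (?m - 1))"
    have q0: "q \<ge> 0" unfolding q_def using mpos K0[of n] by simp
    have nq: "real n * q \<le> c / (?m - 1)"
    proof -
      have "real n * q = (real n * K n) / ?m / (?m - 1)" by (simp add: q_def field_simps)
      also have "\<dots> \<le> (c * ?m) / ?m / (?m - 1)" using nK mpos elim(2)
        by (intro divide_right_mono) auto
      also have "\<dots> = c / (?m - 1)" using elim(2) by simp
      finally show ?thesis .
    qed
    have fb: "measure_pmf.prob (rig_pmf n (m n) (P n)) {S. \<not> pairs_at_most_two n (m n) S}
           \<le> ?m ^ 2 * real n ^ 3 * q ^ 3"
      using fail_bound[OF P_supp elim(2), of n] by (simp add: q_def K_def)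
    also have "\<dots> = ?m ^ 2 * (real n * q) ^ 3" by (simp add: power_mult_distrib)
    also have "\<dots> \<le> ?m ^ 2 * (c / (?m - 1)) ^ 3"
      using nq q0 by (intro mult_left_mono power_mono) auto
    also have "\<dots> = g ?m" by (simp add: g_def power_divide)
    finally have F: "measure_pmf.prob (rig_pmf n (m n) (P n)) {S. \<not> pairs_at_most_two n (m n) S} \<le> g ?m" .
    have "measure_pmf.prob (rig_pmf n (m n) (P n)) {S. pairs_at_most_two n (m n) S}
       = 1 - measure_pmf.prob (rig_pmf n (m n) (P n)) {S. \<not> pairs_at_most_two n (m n) S}"
      using measure_pmf.prob_compl[of "{S. \<not> pairs_at_most_two n (m n) S}" "rig_pmf n (m n) (P n)"]
      by (simp add: Compl_eq_Diff_UNIV[symmetric] Collect_neg_eq[symmetric])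
    then show ?case using F by simp
  qed
  have upper: "eventually (\<lambda>n. measure_pmf.prob (rig_pmf n (m n) (P n))
            {S. pairs_at_most_two n (m n) S} \<le> 1) sequentially"
    by (simp add: measure_pmf.prob_le_1)
  have g0: "(g \<longlongrightarrow> 0) at_top" unfolding g_def by real_asymp
  have mr: "filterlim (\<lambda>n. real (m n)) at_top sequentially"
    by (rule filterlim_compose[OF filterlim_real_sequentially m_inf])
  have "(\<lambda>n. 1 - g (real (m n))) \<longlonglongrightarrow> 1 - 0"
    by (intro tendsto_diff tendsto_const filterlim_compose[OF g0 mr])
  then have "(\<lambda>n. 1 - g (real (m n))) \<longlonglongrightarrow> 1" by simp
  then show ?thesis
    by (rule tendsto_sandwich[OF lower upper _ tendsto_const])
qed

end
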